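(* Consider a single advertiser in a single-slot hybrid auction, with per-click value $v>0$. The advertiser's belief about its click-through rate is a random variable $\mathcal{P}$ on $[0,1]$ equal to the auctioneer's prior, with mean $p=\mathbb{E}[\mathcal{P}]>0$, and the auctioneer's index equals $q=p$. The advertiser submits a bid $(m,c)$ (per-impression and per-click), and has effective bid $\max(m,cq)$; if $R$ denotes the highest competing effective bid, the advertiser obtains the impression iff its effective bid exceeds $R$, paying $R$ per impression if $m>cq$ and $R/q$ per click otherwise. The advertiser has a utility function $U:\mathbb{R}\to\mathbb{R}$ that is monotone increasing with monotone derivative and $U(0)=0$, and, writing $I_R$ for the indicator that it obtains the impression, it evaluates a bid by $I_R\cdot \mathbb{E}[U(v\mathcal{P}-R)]$ if it is charged per impression and $I_R\cdot\mathbb{E}[U(v\mathcal{P}-R\mathcal{P}/p)]$ if it is charged per click (so that it seeks to maximize $I_R\cdot\max(\mathbb{E}[U(v\mathcal{P}-R)],\mathbb{E}[U(v\mathcal{P}-R\mathcal{P}/p)])$). Then: if $U$ is concave, bidding $(0,v)$ is a dominant strategy; if $U$ is convex, there is a dominant strategy of the form $(m,0)$ for a suitably chosen $m$.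
   Context: A strategy is dominant if for every value of the highest competing effective bid $R$ it achieves the maximum possible value of the advertiser's objective. *)

theory Defs
  imports "HOL-Probability.Probability"
begin

definition hybrid_obj ::
  "'a measure \<Rightarrow> ('a \<Rightarrow> real) \<Rightarrow> (real \<Rightarrow> real) \<Rightarrow> real \<Rightarrow> real \<times> real \<Rightarrow> real \<Rightarrow> real" where
  "hybrid_obj M P U v b R =
     (let p = (\<integral>x. P x \<partial>M); q = p; m = fst b; c = snd b in
      if max m (c * q) > R then
        (if m > c * q then (\<integral>x. U (v * P x - R) \<partial>M)
         else (\<integral>x. U (v * P x - R * P x / p) \<partial>M))
      else 0)"

definition dominant ::
  "'a measure \<Rightarrow> ('a \<Rightarrow> real) \<Rightarrow> (real \<Rightarrow> real) \<Rightarrow> real \<Rightarrow> real \<times> real \<Rightarrow> bool" where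
  "dominant M P U v b \<longleftrightarrow>
     (\<forall>R \<ge> 0. \<forall>b'. fst b' \<ge> 0 \<and> snd b' \<ge> 0 \<longrightarrow>
        hybrid_obj M P U v b' R \<le> hybrid_obj M P U v b R)"

end

theory Submission
  imports Defs
begin

lemma jensen_univ:
  fixes g :: "real \<Rightarrow> real"
  assumes "prob_space M" "integrable M Y" "convex_on UNIV g" "integrable M (\<lambda>x. g (Y x))"
  shows "g (\<integral>x. Y x \<partial>M) \<le> (\<integral>x. g (Y x) \<partial>M)"
  using prob_space.jensens_inequality[OF assms(1) assms(2), of UNIV 0 0 g] assms by auto

lemma phi:
  fixes g :: "real \<Rightarrow> real"
  assumes M: "prob_space M" and iP: "integrable M P" and pd: "p = (\<integral>x. P x \<partial>M)"
    and cg: "convex_on UNIV g" and a: "0 \<le> a" "a \<le> v" "0 < v"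
    and ia: "integrable M (\<lambda>x. g (\<mu> + a * (P x - p)))"
    and iv: "integrable M (\<lambda>x. g (\<mu> + v * (P x - p)))"
  shows "(\<integral>x. g (\<mu> + a * (P x - p)) \<partial>M) \<le> (\<integral>x. g (\<mu> + v * (P x - p)) \<partial>M)"
proof -
  interpret prob_space M by fact
  define t where "t = a / v"
  have t: "0 \<le> t" "t \<le> 1" using a by (auto simp: t_def)
  have pt: "g (\<mu> + a * (P x - p)) \<le> (1 - t) * g \<mu> + t * g (\<mu> + v * (P x - p))" for x
  proof -
    have "\<mu> + a * (P x - p) = (1 - t) *\<^sub>R \<mu> + t *\<^sub>R (\<mu> + v * (P x - p))"
      using a by (simp add: t_def algebra_simps)
    then show ?thesis using convex_onD[OF cg t] by simp
  qed
  have hJ: "g \<mu> \<le> (\<integral>x. g (\<mu> + v * (P x - p)) \<partial>M)"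
  proof -
    have iY: "integrable M (\<lambda>x. \<mu> + v * (P x - p))" using iP by auto
    have "(\<integral>x. \<mu> + v * (P x - p) \<partial>M) = \<mu>"
      using iP pd by (simp add: prob_space algebra_simps)
    then show ?thesis using jensen_univ[OF M iY cg iv] by simp
  qed
  have "(\<integral>x. g (\<mu> + a * (P x - p)) \<partial>M) \<le> (\<integral>x. (1 - t) * g \<mu> + t * g (\<mu> + v * (P x - p)) \<partial>M)"
    by (intro integral_mono ia pt) (auto intro!: iv)
  also have "\<dots> = (1 - t) * g \<mu> + t * (\<integral>x. g (\<mu> + v * (P x - p)) \<partial>M)"
    using iv by (simp add: prob_space)
  also have "\<dots> \<le> (\<integral>x. g (\<mu> + v * (P x - p)) \<partial>M)"
  proof -
    have "(1 - t) * g \<mu> \<le> (1 - t) * (\<integral>x. g (\<mu> + v * (P x - p)) \<partial>M)"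
      using t hJ by (intro mult_left_mono) auto
    then show ?thesis by (simp add: algebra_simps)
  qed
  finally show ?thesis .
qed

lemma intU:
  fixes U :: "real \<Rightarrow> real"
  assumes M: "prob_space M" and Pm: "P \<in> borel_measurable M"
    and P01: "\<forall>x\<in>space M. 0 \<le> P x \<and> P x \<le> 1"
    and mU: "mono U" and cU: "continuous_on UNIV U"
  shows "integrable M (\<lambda>x. U (c * P x + d))"
proof -
  interpret prob_space M by fact
  have meas: "(\<lambda>x. U (c * P x + d)) \<in> borel_measurable M"
    using borel_measurable_continuous_on[OF cU, of "\<lambda>x. c * P x + d"] Pm by auto
  have "norm (U (c * P x + d)) \<le> \<bar>U d\<bar> + \<bar>U (c + d)\<bar>" if "x \<in> space M" for x
  proof -
    have "min d (c + d) \<le> c * P x + d \<and> c * P x + d \<le> max d (c + d)"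
      using P01 that by (cases "c \<ge> 0") (auto simp: mult_left_le mult_le_cancel_left1 mult_nonneg_nonneg mult_nonpos_nonneg)
    hence "U (min d (c+d)) \<le> U (c * P x + d) \<and> U (c * P x + d) \<le> U (max d (c + d))"
      using mU by (auto dest: monoD)
    then show ?thesis by (auto simp: min_def max_def split: if_splits)
  qed
  then show ?thesis by (intro integrable_const_bound[of _ "\<bar>U d\<bar> + \<bar>U (c + d)\<bar>"] meas) auto
qed

theorem lemma2:
  fixes M :: "'a measure" and P :: "'a \<Rightarrow> real" and U :: "real \<Rightarrow> real" and v :: real
  assumes "prob_space M"
    and "P \<in> borel_measurable M"
    and "\<forall>x\<in>space M. 0 \<le> P x \<and> P x \<le> 1"
    and "(\<integral>x. P x \<partial>M) > 0"
    and "v > 0"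
    and "mono U"
    and "\<forall>x. U differentiable (at x)"
    and "mono (deriv U) \<or> antimono (deriv U)"
    and "U 0 = 0"
  shows "(concave_on UNIV U \<longrightarrow> dominant M P U v (0, v)) \<and>
         (convex_on UNIV U \<longrightarrow> (\<exists>m \<ge> 0. dominant M P U v (m, 0)))"
proof -
  note M = assms(1) and Pm = assms(2) and P01 = assms(3) and vpos = assms(5)
    and mU = assms(6) and U0 = assms(9)
  interpret prob_space M by fact
  define p where "p = (\<integral>x. P x \<partial>M)"
  have ppos: "p > 0" using assms(4) by (simp add: p_def)
  have iP: "integrable M P"
    using P01 Pm by (intro integrable_const_bound[of _ 1]) auto
  have cU: "continuous_on UNIV U"
    using assms(7) by (meson continuous_at_imp_continuous_on differentiable_imp_continuous_within)
  define fY where "fY R = (\<integral>x. U (v * P x - R) \<partial>M)" for R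
  define fX where "fX R = (\<integral>x. U (v * P x - R * P x / p) \<partial>M)" for R
  have eqX: "v * P x - R * P x / p = (v - R / p) * P x + 0" for x R
    by (simp add: algebra_simps)
  have eqY: "v * P x - R = v * P x + (- R)" for x R by simp
  have iX: "integrable M (\<lambda>x. U (v * P x - R * P x / p))" for R
    unfolding eqX by (rule intU[OF M Pm P01 mU cU])
  have iY: "integrable M (\<lambda>x. U (v * P x - R))" for R
    unfolding eqY by (rule intU[OF M Pm P01 mU cU])
  have obj: "hybrid_obj M P U v b R \<in> {0, fY R, fX R}" for b R
    unfolding hybrid_obj_def Let_def p_def[symmetric] fY_def fX_def by auto
  have key: "(\<integral>x. g (v * P x - R * P x / p) \<partial>M) \<le> (\<integral>x. g (v * P x - R) \<partial>M)"
    if cg: "convex_on UNIV g" and ia: "integrable M (\<lambda>x. g (v * P x - R * P x / p))"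
      and iv: "integrable M (\<lambda>x. g (v * P x - R))" and R: "0 \<le> R" "R \<le> v * p" for g R
  proof -
    have e1: "v * p - R + (v - R / p) * (P x - p) = v * P x - R * P x / p" for x
      using ppos by (simp add: field_simps)
    have e2: "v * p - R + v * (P x - p) = v * P x - R" for x
      by (simp add: field_simps)
    have a: "0 \<le> v - R / p" "v - R / p \<le> v"
      using R ppos by (auto simp: field_simps)
    show ?thesis
      using phi[OF M iP p_def cg a vpos, of "v * p - R"] ia iv unfolding e1 e2 by simp
  qed
  have Xnonpos: "fX R \<le> 0" if "v * p \<le> R" for R
  proof -
    have "v - R / p \<le> 0" using that ppos by (simp add: field_simps)
    hence "U (v * P x - R * P x / p) \<le> 0" if "x \<in> space M" for x
    proof -
      have "(v - R / p) * P x \<le> 0" using P01 that \<open>v - R / p \<le> 0\<close>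
        by (simp add: mult_nonpos_nonneg)
      then show ?thesis unfolding eqX using mU U0 by (metis add_0_right monoD)
    qed
    hence "fX R \<le> (\<integral>x. 0 \<partial>M)" unfolding fX_def
      by (intro integral_mono) (auto intro: iX)
    then show ?thesis by simp
  qed
  have Xnonneg: "0 \<le> fX R" if "R \<le> v * p" for R
  proof -
    have "0 \<le> v - R / p" using that ppos by (simp add: field_simps)
    hence "0 \<le> U (v * P x - R * P x / p)" if "x \<in> space M" for x
    proof -
      have "0 \<le> (v - R / p) * P x" using P01 that \<open>0 \<le> v - R / p\<close> by simp
      then show ?thesis unfolding eqX using mU U0 by (metis add_0_right monoD)
    qed
    then show ?thesis unfolding fX_def by (intro integral_nonneg_AE AE_I2) auto
  qed
  have Ymono: "fY R2 \<le> fY R1" if "R1 \<le> R2" for R1 R2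
    unfolding fY_def using that
    by (intro integral_mono iY) (auto intro!: monoD[OF mU])
  have conc: "concave_on UNIV U \<longrightarrow> dominant M P U v (0, v)"
  proof
    assume cc: "concave_on UNIV U"
    have cnU: "convex_on UNIV (\<lambda>x. - U x)" using cc by (simp add: concave_on_def)
    show "dominant M P U v (0, v)"
      unfolding dominant_def
    proof (intro allI impI)
      fix R :: real and b' :: "real \<times> real"
      assume R: "0 \<le> R"
      have vp: "0 < v * p" using vpos ppos by simp
      have o0: "hybrid_obj M P U v (0, v) R = (if R < v * p then fX R else 0)"
        unfolding hybrid_obj_def Let_def p_def[symmetric] fX_def using vp by auto
      show "hybrid_obj M P U v b' R \<le> hybrid_obj M P U v (0, v) R"
      proof (cases "R < v * p")
        case True
        have "(\<integral>x. - U (v * P x - R * P x / p) \<partial>M) \<le> (\<integral>x. - U (v * P x - R) \<partial>M)"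
          using key[OF cnU _ _ R] True iX iY by auto
        hence "fY R \<le> fX R" unfolding fX_def fY_def by simp
        then show ?thesis using obj[of b' R] o0 True Xnonneg[of R] by auto
      next
        case False
        have iYY: "integrable M (\<lambda>x. v * P x - R)" using iP by auto
        have "- U (\<integral>x. v * P x - R \<partial>M) \<le> (\<integral>x. - U (v * P x - R) \<partial>M)"
          using jensen_univ[OF M iYY cnU] iY by auto
        moreover have "(\<integral>x. v * P x - R \<partial>M) = v * p - R"
          using iP by (simp add: prob_space p_def)
        moreover have "U (v * p - R) \<le> 0" using False U0 mU by (metis monoD diff_le_0_iff_le not_less)
        ultimately have "fY R \<le> 0" unfolding fY_def by simp
        then show ?thesis using obj[of b' R] o0 False Xnonpos[of R] by auto
      qed
    qed
  qed
  have conv: "convex_on UNIV U \<longrightarrow> (\<exists>m \<ge> 0. dominant M P U v (m, 0))"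
  proof
    assume cU': "convex_on UNIV U"
    have XY: "fX R \<le> max 0 (fY R)" if "0 \<le> R" for R
    proof (cases "R \<le> v * p")
      case True
      then show ?thesis using key[OF cU' iX iY that True] unfolding fX_def fY_def by simp
    next
      case False
      then show ?thesis using Xnonpos[of R] by simp
    qed
    have cvY: "convex_on UNIV fY"
    proof (rule convex_onI)
      fix t x y :: real
      assume t: "0 < t" "t < 1"
      have "fY ((1 - t) *\<^sub>R x + t *\<^sub>R y) \<le>
          (\<integral>z. (1 - t) * U (v * P z - x) + t * U (v * P z - y) \<partial>M)"
        unfolding fY_def
      proof (intro integral_mono iY)
        show "integrable M (\<lambda>z. (1 - t) * U (v * P z - x) + t * U (v * P z - y))"
          using iY by auto
        fix z
        have "v * P z - ((1 - t) *\<^sub>R x + t *\<^sub>R y) = (1 - t) *\<^sub>R (v * P z - x) + t *\<^sub>R (v * P z - y)"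
          by (simp add: algebra_simps)
        then show "U (v * P z - ((1 - t) *\<^sub>R x + t *\<^sub>R y)) \<le> (1 - t) * U (v * P z - x) + t * U (v * P z - y)"
          using convex_onD[OF cU', of t] t by simp
      qed
      also have "\<dots> = (1 - t) * fY x + t * fY y"
        unfolding fY_def using iY by simp
      finally show "fY ((1 - t) *\<^sub>R x + t *\<^sub>R y) \<le> (1 - t) * fY x + t * fY y" .
    qed simp
    have ctY: "continuous_on UNIV fY"
      using convex_on_continuous[OF open_UNIV cvY] .
    define S where "S = {R. 0 \<le> R \<and> fY R \<le> 0}"
    have clS: "closed S" unfolding S_def
      by (intro closed_Collect_conj closed_Collect_le ctY continuous_on_const continuous_on_id)
    have Yv: "fY v \<le> 0"
    proof -
      have "U (v * P x - v) \<le> 0" if "x \<in> space M" for x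
      proof -
        have "v * P x - v \<le> 0" using P01 that vpos by (simp add: mult_le_cancel_left1)
        then show ?thesis using mU U0 by (metis monoD)
      qed
      hence "fY v \<le> (\<integral>x. 0 \<partial>M)" unfolding fY_def
        by (intro integral_mono) (auto intro: iY)
      then show ?thesis by simp
    qed
    have ne: "S \<noteq> {}" using Yv vpos unfolding S_def by (auto intro!: exI[of _ v])
    have bb: "bdd_below S" unfolding S_def by (auto intro: bdd_belowI[of _ 0])
    define m where "m = Inf S"
    have mS: "m \<in> S" unfolding m_def using closed_contains_Inf[OF ne bb clS] .
    have less: "0 < fY R" if "0 \<le> R" "R < m" for R
    proof (rule ccontr)
      assume "\<not> 0 < fY R"
      hence "R \<in> S" using that unfolding S_def by auto
      hence "m \<le> R" unfolding m_def using bb by (rule cInf_lower)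
      then show False using that by simp
    qed
    have m0: "0 \<le> m" using mS unfolding S_def by simp
    have "dominant M P U v (m, 0)"
      unfolding dominant_def
    proof (intro allI impI)
      fix R :: real and b' :: "real \<times> real"
      assume R: "0 \<le> R"
      have om: "hybrid_obj M P U v (m, 0) R = (if R < m then fY R else 0)"
        unfolding hybrid_obj_def Let_def p_def[symmetric] fY_def using R m0 by auto
      show "hybrid_obj M P U v b' R \<le> hybrid_obj M P U v (m, 0) R"
      proof (cases "R < m")
        case True
        then show ?thesis using obj[of b' R] om less[OF R True] XY[OF R] by auto
      next
        case False
        have "fY R \<le> 0" using Ymono[of m R] False mS unfolding S_def by simp
        then show ?thesis using obj[of b' R] om False XY[OF R] by auto
      qed
    qed
    then show "\<exists>m \<ge> 0. dominant M P U v (m, 0)" using m0 by blast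
  qed
  show ?thesis using conc conv by blast
qed

end
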